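(* Let $T=(P,M,D,O)$ be an operational theory equipped with a convex structure, and suppose $T$ contains a maximally mixed preparation $p^{mix}$. Let $m\in M$ be a perfectly predictable measurement. If $(\Omega,\mu,\xi)$ is a preparation non-contextual ontological representation of $T$ that preserves convexity, then $\xi_m$ is outcome-deterministic: $\xi_m(\lambda)(k)\in\{0,1\}$ for all $\lambda\in\Omega$ and $k\in O^m$.
   Context: An operational theory $T=(P,M,D,O)$ consists of a set $P$ of preparations, a set $M$ of measurements, for each $m\in M$ a finite nonempty set $O^m$ of outcomes (with $O=\bigcup_m O^m$), and for each $(p,m)\in P\times M$ a probability distribution $d_{p,m}:O^m\to[0,1]$; $D=\{d_{p,m}\}$. Statistical equivalence: $p\sim p'$ iff $d_{p,m}=d_{p',m}$ for all $m\in M$; $m\sim m'$ iff $d_{p,m}=d_{p,m'}$ for all $p\in P$; $(m,k)\sim(m',k')$ (for $k\in O^m$, $k'\in O^{m'}$) iff $d_{p,m}(k)=d_{p,m'}(k')$ for all $p\in P$. An ontological representation of $T$ is a triple $(\Omega,\mu,\xi)$ where $\Omega$ is a countable set, $\mu_p$ is a probability distribution on $\Omega$ for each $p\in P$, and for each $m\in M$, $\lambda\in\Omega$, $\xi_m(\lambda)$ is a probability distribution on $O^m$, such that $\sum_{\lambda\in\Omega}\xi_m(\lambda)(k)\mu_p(\lambda)=d_{p,m}(k)$ for all $p,m,k$, and such that for every $\lambda\in\Omega$ there is $p\in P$ with $\mu_p(\lambda)>0$. It is preparation non-contextual if $p\sim p'$ implies $\mu_p=\mu_{p'}$. Convex structure: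 some preparations are designated as (formal) convex combinations $p=\sum_i c_ip_i$ of finitely many preparations $p_i$ with $c_i>0$, $\sum_i c_i=1$, and likewise some measurements are designated as convex combinations $\sum_i c_i m_i$ of measurements with a common outcome set. A representation preserves convexity (Assumption 1) if $\mu_{\sum_i c_ip_i}=\sum_i c_i\mu_{p_i}$ and $\xi_{\sum_i c_im_i}(\lambda)=\sum_i c_i\xi_{m_i}(\lambda)$ for all such designated combinations and all $\lambda$. A measurement $m$ is perfectly predictable if for every $k\in O^m$ there is a preparation $p_k$ with $d_{p_k,m}(k')=\delta_{k,k'}$ for all $k'\in O^m$. A preparation $p^{mix}$ is maximally mixed if (1) for every preparation $p'$, $p^{mix}$ is statistically equivalent to some preparation that is a convex combination (with positive weights) of preparations among which is $p'$; and (2) for every perfectly predictable measurement $m$, $p^{mix}$ is statistically equivalent to some preparation that is a convex combination, with positive weights, of preparations $p_k$ ($k\in O^m$) as in the definition of perfect predictability. *)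

theory Defs
  imports "HOL-Analysis.Analysis"
begin

definition op_theory ::
  "'p set \<Rightarrow> 'm set \<Rightarrow> ('m \<Rightarrow> 'o set) \<Rightarrow> ('p \<Rightarrow> 'm \<Rightarrow> 'o \<Rightarrow> real) \<Rightarrow> bool" where
  "op_theory P M Om d \<longleftrightarrow>
     (\<forall>m\<in>M. finite (Om m) \<and> Om m \<noteq> {}) \<and>
     (\<forall>p\<in>P. \<forall>m\<in>M. (\<forall>k\<in>Om m. d p m k \<ge> 0) \<and> (\<Sum>k\<in>Om m. d p m k) = 1)"

definition prep_equiv ::
  "'m set \<Rightarrow> ('m \<Rightarrow> 'o set) \<Rightarrow> ('p \<Rightarrow> 'm \<Rightarrow> 'o \<Rightarrow> real) \<Rightarrow> 'p \<Rightarrow> 'p \<Rightarrow> bool" where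
  "prep_equiv M Om d p p' \<longleftrightarrow> (\<forall>m\<in>M. \<forall>k\<in>Om m. d p m k = d p' m k)"

text \<open>Convex structure: CP is the set of designated convex combinations of preparations
  (q, [(c_1,p_1),...,(c_n,p_n)]) meaning q = sum c_i p_i; likewise CM for measurements.\<close>
definition convex_structure ::
  "'p set \<Rightarrow> 'm set \<Rightarrow> ('m \<Rightarrow> 'o set) \<Rightarrow> ('p \<times> (real \<times> 'p) list) set
    \<Rightarrow> ('m \<times> (real \<times> 'm) list) set \<Rightarrow> bool" where
  "convex_structure P M Om CP CM \<longleftrightarrow>
     (\<forall>(q, cs)\<in>CP. q \<in> P \<and> cs \<noteq> [] \<and> (\<forall>(c, p)\<in>set cs. c > 0 \<and> p \<in> P)
                   \<and> (\<Sum>(c, p)\<leftarrow>cs. c) = 1) \<and>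
     (\<forall>(m, cs)\<in>CM. m \<in> M \<and> cs \<noteq> [] \<and> (\<forall>(c, m')\<in>set cs. c > 0 \<and> m' \<in> M \<and> Om m' = Om m)
                   \<and> (\<Sum>(c, m')\<leftarrow>cs. c) = 1)"

definition perfectly_predictable ::
  "'p set \<Rightarrow> ('m \<Rightarrow> 'o set) \<Rightarrow> ('p \<Rightarrow> 'm \<Rightarrow> 'o \<Rightarrow> real) \<Rightarrow> 'm \<Rightarrow> bool" where
  "perfectly_predictable P Om d m \<longleftrightarrow>
     (\<forall>k\<in>Om m. \<exists>pk\<in>P. \<forall>k'\<in>Om m. d pk m k' = (if k = k' then 1 else 0))"

definition maximally_mixed ::
  "'p set \<Rightarrow> 'm set \<Rightarrow> ('m \<Rightarrow> 'o set) \<Rightarrow> ('p \<Rightarrow> 'm \<Rightarrow> 'o \<Rightarrow> real)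
    \<Rightarrow> ('p \<times> (real \<times> 'p) list) set \<Rightarrow> 'p \<Rightarrow> bool" where
  "maximally_mixed P M Om d CP pmix \<longleftrightarrow>
     pmix \<in> P \<and>
     (\<forall>p'\<in>P. \<exists>q cs. (q, cs) \<in> CP \<and> p' \<in> snd ` set cs \<and> prep_equiv M Om d pmix q) \<and>
     (\<forall>m\<in>M. perfectly_predictable P Om d m \<longrightarrow>
        (\<exists>pk q cs. (\<forall>k\<in>Om m. pk k \<in> P \<and>
                       (\<forall>k'\<in>Om m. d (pk k) m k' = (if k = k' then 1 else 0)))
                  \<and> (q, cs) \<in> CP \<and> snd ` set cs = pk ` Om m
                  \<and> prep_equiv M Om d pmix q))"

definition ont_rep ::
  "'p set \<Rightarrow> 'm set \<Rightarrow> ('m \<Rightarrow> 'o set) \<Rightarrow> ('p \<Rightarrow> 'm \<Rightarrow> 'o \<Rightarrow> real)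
    \<Rightarrow> 'l set \<Rightarrow> ('p \<Rightarrow> 'l \<Rightarrow> real) \<Rightarrow> ('m \<Rightarrow> 'l \<Rightarrow> 'o \<Rightarrow> real) \<Rightarrow> bool" where
  "ont_rep P M Om d \<Omega> \<mu> \<xi> \<longleftrightarrow>
     countable \<Omega> \<and>
     (\<forall>p\<in>P. (\<forall>l\<in>\<Omega>. \<mu> p l \<ge> 0) \<and> (\<mu> p has_sum 1) \<Omega>) \<and>
     (\<forall>m\<in>M. \<forall>l\<in>\<Omega>. (\<forall>k\<in>Om m. \<xi> m l k \<ge> 0) \<and> (\<Sum>k\<in>Om m. \<xi> m l k) = 1) \<and>
     (\<forall>p\<in>P. \<forall>m\<in>M. \<forall>k\<in>Om m. ((\<lambda>l. \<xi> m l k * \<mu> p l) has_sum d p m k) \<Omega>) \<and>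
     (\<forall>l\<in>\<Omega>. \<exists>p\<in>P. \<mu> p l > 0)"

definition prep_noncontextual ::
  "'p set \<Rightarrow> 'm set \<Rightarrow> ('m \<Rightarrow> 'o set) \<Rightarrow> ('p \<Rightarrow> 'm \<Rightarrow> 'o \<Rightarrow> real)
    \<Rightarrow> 'l set \<Rightarrow> ('p \<Rightarrow> 'l \<Rightarrow> real) \<Rightarrow> bool" where
  "prep_noncontextual P M Om d \<Omega> \<mu> \<longleftrightarrow>
     (\<forall>p\<in>P. \<forall>p'\<in>P. prep_equiv M Om d p p' \<longrightarrow> (\<forall>l\<in>\<Omega>. \<mu> p l = \<mu> p' l))"

definition preserves_convexity ::
  "('m \<Rightarrow> 'o set) \<Rightarrow> ('p \<times> (real \<times> 'p) list) set \<Rightarrow> ('m \<times> (real \<times> 'm) list) set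
    \<Rightarrow> 'l set \<Rightarrow> ('p \<Rightarrow> 'l \<Rightarrow> real) \<Rightarrow> ('m \<Rightarrow> 'l \<Rightarrow> 'o \<Rightarrow> real) \<Rightarrow> bool" where
  "preserves_convexity Om CP CM \<Omega> \<mu> \<xi> \<longleftrightarrow>
     (\<forall>(q, cs)\<in>CP. \<forall>l\<in>\<Omega>. \<mu> q l = (\<Sum>(c, p)\<leftarrow>cs. c * \<mu> p l)) \<and>
     (\<forall>(m, cs)\<in>CM. \<forall>l\<in>\<Omega>. \<forall>k\<in>Om m. \<xi> m l k = (\<Sum>(c, m')\<leftarrow>cs. c * \<xi> m' l k))"

end

theory Submission
  imports Defs
begin

lemma list_member_le:
  fixes f :: "real \<Rightarrow> 'a \<Rightarrow> real"
  assumes "\<forall>(c,p)\<in>set cs. 0 \<le> f c p" and "(c0,p0) \<in> set cs"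
  shows "f c0 p0 \<le> (\<Sum>(c,p)\<leftarrow>cs. f c p)"
  using assms
proof (induction cs)
  case Nil then show ?case by simp
next
  case (Cons a cs)
  obtain a1 a2 where a: "a = (a1,a2)" by (cases a)
  have s: "0 \<le> (\<Sum>(c,p)\<leftarrow>cs. f c p)"
    using Cons.prems(1) by (intro sum_list_nonneg) auto
  show ?case
  proof (cases "(c0,p0) = a")
    case True
    then show ?thesis using s a by simp
  next
    case False
    then have "f c0 p0 \<le> (\<Sum>(c,p)\<leftarrow>cs. f c p)" using Cons by auto
    moreover have "0 \<le> f a1 a2" using Cons.prems(1) a by auto
    ultimately show ?thesis using a by simp
  qed
qed

lemma list_pos_ex:
  fixes f :: "real \<Rightarrow> 'a \<Rightarrow> real"
  assumes "0 < (\<Sum>(c,p)\<leftarrow>cs. f c p)"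
  shows "\<exists>(c,p)\<in>set cs. 0 < f c p"
proof (rule ccontr)
  assume "\<not> ?thesis"
  then have "(\<Sum>(c,p)\<leftarrow>cs. f c p) \<le> 0"
    by (intro sum_list_nonpos) auto
  with assms show False by simp
qed

lemma has_sum_zero_nonneg:
  fixes f :: "'l \<Rightarrow> real"
  assumes "(f has_sum 0) A" "\<And>x. x \<in> A \<Longrightarrow> 0 \<le> f x" "x \<in> A"
  shows "f x = 0"
proof -
  have h: "(f has_sum f x) {x}" using has_sum_finite[of "{x}" f] by simp
  have "f x \<le> 0"
    by (rule has_sum_mono_neutral[OF h assms(1)]) (use assms in auto)
  with assms(2)[OF assms(3)] show ?thesis by simp
qed

theorem mainTheorem1:
  fixes P :: "'p set" and M :: "'m set" and Om :: "'m \<Rightarrow> 'o set"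
    and d :: "'p \<Rightarrow> 'm \<Rightarrow> 'o \<Rightarrow> real"
    and CP :: "('p \<times> (real \<times> 'p) list) set" and CM :: "('m \<times> (real \<times> 'm) list) set"
    and pmix :: 'p and m :: 'm
    and \<Omega> :: "'l set" and \<mu> :: "'p \<Rightarrow> 'l \<Rightarrow> real" and \<xi> :: "'m \<Rightarrow> 'l \<Rightarrow> 'o \<Rightarrow> real"
  assumes "op_theory P M Om d"
    and "convex_structure P M Om CP CM"
    and "maximally_mixed P M Om d CP pmix"
    and "m \<in> M"
    and "perfectly_predictable P Om d m"
    and "ont_rep P M Om d \<Omega> \<mu> \<xi>"
    and "prep_noncontextual P M Om d \<Omega> \<mu>"
    and "preserves_convexity Om CP CM \<Omega> \<mu> \<xi>"
  shows "\<forall>l\<in>\<Omega>. \<forall>k\<in>Om m. \<xi> m l k \<in> {0, 1}"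
proof (intro ballI)
  fix l k assume l: "l \<in> \<Omega>" and k: "k \<in> Om m"
  have cs: "\<And>q cs. (q,cs) \<in> CP \<Longrightarrow> q \<in> P \<and> (\<forall>(c, p)\<in>set cs. c > 0 \<and> p \<in> P)"
    using assms(2) unfolding convex_structure_def by fastforce
  have mu_nn: "\<And>p. p \<in> P \<Longrightarrow> 0 \<le> \<mu> p l"
    using assms(6) l unfolding ont_rep_def by auto
  have pc: "\<And>q cs. (q,cs) \<in> CP \<Longrightarrow> \<mu> q l = (\<Sum>(c, p)\<leftarrow>cs. c * \<mu> p l)"
    using assms(8) l unfolding preserves_convexity_def by fastforce
  have nc: "\<And>q. q \<in> P \<Longrightarrow> prep_equiv M Om d pmix q \<Longrightarrow> \<mu> pmix l = \<mu> q l"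
    using assms(7) assms(3) l unfolding prep_noncontextual_def maximally_mixed_def by auto
  obtain p where p: "p \<in> P" "\<mu> p l > 0"
    using assms(6) l unfolding ont_rep_def by auto
  obtain q cs where q: "(q,cs) \<in> CP" "p \<in> snd ` set cs" "prep_equiv M Om d pmix q"
    using assms(3) p(1) unfolding maximally_mixed_def by blast
  obtain c where c: "(c,p) \<in> set cs" using q(2) by force
  have cpos: "c > 0" using cs[OF q(1)] c by auto
  have "c * \<mu> p l \<le> (\<Sum>(c, p)\<leftarrow>cs. c * \<mu> p l)"
    by (rule list_member_le[OF _ c, where f="\<lambda>c p. c * \<mu> p l"])
       (use cs[OF q(1)] mu_nn in fastforce)
  moreover have "0 < c * \<mu> p l" using cpos p(2) by simp
  ultimately have mixpos: "\<mu> pmix l > 0"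
    using pc[OF q(1)] nc[of q] cs[OF q(1)] q(3) by simp
  obtain pk q2 cs2 where pk: "\<forall>k\<in>Om m. pk k \<in> P \<and>
                       (\<forall>k'\<in>Om m. d (pk k) m k' = (if k = k' then 1 else 0))"
      and q2: "(q2, cs2) \<in> CP" "snd ` set cs2 = pk ` Om m" "prep_equiv M Om d pmix q2"
    using assms(3) assms(4) assms(5) unfolding maximally_mixed_def by blast
  have "0 < (\<Sum>(c, p)\<leftarrow>cs2. c * \<mu> p l)"
    using mixpos pc[OF q2(1)] nc[of q2] cs[OF q2(1)] q2(3) by simp
  then obtain c2 p2 where c2: "(c2,p2) \<in> set cs2" "0 < c2 * \<mu> p2 l"
    using list_pos_ex[where f="\<lambda>c p. c * \<mu> p l"] by fastforce
  have c2pos: "c2 > 0" using cs[OF q2(1)] c2(1) by auto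
  have "p2 \<in> pk ` Om m" using q2(2) c2(1) by force
  then obtain k0 where k0: "k0 \<in> Om m" "p2 = pk k0" by blast
  have mupos: "\<mu> (pk k0) l > 0" using c2 c2pos k0(2)
    by (metis mult_pos_pos zero_less_mult_pos)
  have pkP: "pk k0 \<in> P" using pk k0 by auto
  have xi_nn: "\<And>l k. l \<in> \<Omega> \<Longrightarrow> k \<in> Om m \<Longrightarrow> 0 \<le> \<xi> m l k"
    using assms(6) assms(4) unfolding ont_rep_def by auto
  have xisum: "(\<Sum>k\<in>Om m. \<xi> m l k) = 1"
    using assms(6) assms(4) l unfolding ont_rep_def by auto
  have fin: "finite (Om m)" using assms(1) assms(4) unfolding op_theory_def by auto
  have zero: "\<xi> m l k' = 0" if k': "k' \<in> Om m" "k' \<noteq> k0" for k'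
  proof -
    have hs: "((\<lambda>l. \<xi> m l k' * \<mu> (pk k0) l) has_sum d (pk k0) m k') \<Omega>"
      using assms(6) assms(4) pkP k'(1) unfolding ont_rep_def by auto
    have "d (pk k0) m k' = 0" using pk k0(1) k' by auto
    with hs have "\<xi> m l k' * \<mu> (pk k0) l = 0"
      using has_sum_zero_nonneg[of "\<lambda>l. \<xi> m l k' * \<mu> (pk k0) l" \<Omega> l] l
        xi_nn[OF _ k'(1)] assms(6) pkP unfolding ont_rep_def by auto
    then show ?thesis using mupos by simp
  qed
  have "(\<Sum>k\<in>Om m. \<xi> m l k) = \<xi> m l k0"
  proof -
    have "(\<Sum>k\<in>Om m - {k0}. \<xi> m l k) = 0" using zero by (intro sum.neutral) auto
    then show ?thesis using sum.remove[OF fin k0(1), of "\<lambda>k. \<xi> m l k"] by simp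
  qed
  then have one: "\<xi> m l k0 = 1" using xisum by simp
  show "\<xi> m l k \<in> {0, 1}"
    using one zero k by (cases "k = k0") auto
qed

end
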